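(* Every flexible C-loop is an ARIF loop, i.e. it satisfies $(zx)(yxy)=(z(xyx))y$ for all $x,y,z$.
   Context: A C-loop is a loop satisfying $x(y(yz))=((xy)y)z$ for all $x,y,z$. A loop is flexible if $(xy)x=x(yx)$ for all $x,y$ (so expressions such as $xyx$ are unambiguous). An ARIF loop is a flexible loop satisfying $(zx)(yxy)=(z(xyx))y$ for all $x,y,z$. *)

theory Defs
  imports Main
begin

definition loop :: "('a \<Rightarrow> 'a \<Rightarrow> 'a) \<Rightarrow> 'a \<Rightarrow> bool" where
  "loop m e \<longleftrightarrow>
     (\<forall>x. m e x = x \<and> m x e = x) \<and>
     (\<forall>a b. \<exists>!x. m a x = b) \<and>
     (\<forall>a b. \<exists>!y. m y a = b)"

definition C_loop :: "('a \<Rightarrow> 'a \<Rightarrow> 'a) \<Rightarrow> 'a \<Rightarrow> bool" where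
  "C_loop m e \<longleftrightarrow> loop m e \<and>
     (\<forall>x y z. m x (m y (m y z)) = m (m (m x y) y) z)"

definition flexible :: "('a \<Rightarrow> 'a \<Rightarrow> 'a) \<Rightarrow> bool" where
  "flexible m \<longleftrightarrow> (\<forall>x y. m (m x y) x = m x (m y x))"

definition ARIF_loop :: "('a \<Rightarrow> 'a \<Rightarrow> 'a) \<Rightarrow> 'a \<Rightarrow> bool" where
  "ARIF_loop m e \<longleftrightarrow> loop m e \<and> flexible m \<and>
     (\<forall>x y z. m (m z x) (m (m y x) y) = m (m z (m (m x y) x)) y)"

end

theory Submission
  imports Defs
begin

locale cl =
  fixes m :: "'a \<Rightarrow> 'a \<Rightarrow> 'a" (infixl "\<cdot>" 70) and e :: 'a and i :: "'a \<Rightarrow> 'a"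
  assumes le: "e \<cdot> x = x" and re: "x \<cdot> e = x"
  and RI: "x \<cdot> i x = e"
  and C: "x \<cdot> (y \<cdot> (y \<cdot> z)) = ((x \<cdot> y) \<cdot> y) \<cdot> z"

context cl
begin
lemma LA: "x \<cdot> (x \<cdot> y) = (x \<cdot> x) \<cdot> y" by (metis C le)
lemma RA: "(y \<cdot> x) \<cdot> x = y \<cdot> (x \<cdot> x)" by (metis C re)
lemma LIP: "i x \<cdot> (x \<cdot> y) = y" by (metis C RI le)
lemma LI: "i x \<cdot> x = e" by (metis LIP re)
lemma RIP: "(y \<cdot> x) \<cdot> i x = y" by (metis C LI RA le)
lemma N2: "y \<cdot> ((x \<cdot> x) \<cdot> z) = (y \<cdot> (x \<cdot> x)) \<cdot> z" using C LA RA by auto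
lemma N3: "(y \<cdot> z) \<cdot> (x \<cdot> x) = y \<cdot> (z \<cdot> (x \<cdot> x))" by (smt (verit, best) LIP N2 RIP)

lemma key: "(z \<cdot> (p \<cdot> x)) \<cdot> (i x \<cdot> p) = z \<cdot> (p \<cdot> p)"
proof -
  let ?w = "p \<cdot> x"
  have q: "?w \<cdot> i x = p" by (rule RIP)
  have r: "i ?w \<cdot> p = i x" using LIP[of ?w "i x"] q by simp
  have "i x \<cdot> p = (i ?w \<cdot> p) \<cdot> p" by (simp add: r)
  also have "\<dots> = i ?w \<cdot> (p \<cdot> p)" by (rule RA)
  finally have "(z \<cdot> ?w) \<cdot> (i x \<cdot> p) = (z \<cdot> ?w) \<cdot> (i ?w \<cdot> (p \<cdot> p))" by simp
  also have "\<dots> = ((z \<cdot> ?w) \<cdot> i ?w) \<cdot> (p \<cdot> p)" by (rule N3[symmetric])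
  also have "\<dots> = z \<cdot> (p \<cdot> p)" by (simp add: RIP)
  finally show ?thesis .
qed

lemma arif:
  assumes F: "\<And>x y. (x \<cdot> y) \<cdot> x = x \<cdot> (y \<cdot> x)"
  shows "(z \<cdot> x) \<cdot> ((y \<cdot> x) \<cdot> y) = (z \<cdot> ((x \<cdot> y) \<cdot> x)) \<cdot> y"
proof -
  let ?p = "x \<cdot> y"
  have y: "i x \<cdot> ?p = y" by (rule LIP)
  have "(y \<cdot> x) \<cdot> y = y \<cdot> ?p" by (rule F)
  also have "\<dots> = (i x \<cdot> ?p) \<cdot> ?p" by (simp only: y)
  also have "\<dots> = i x \<cdot> (?p \<cdot> ?p)" by (rule RA)
  finally have "(z \<cdot> x) \<cdot> ((y \<cdot> x) \<cdot> y) = (z \<cdot> x) \<cdot> (i x \<cdot> (?p \<cdot> ?p))" by simp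
  also have "\<dots> = ((z \<cdot> x) \<cdot> i x) \<cdot> (?p \<cdot> ?p)" by (rule N3[symmetric])
  also have "\<dots> = z \<cdot> (?p \<cdot> ?p)" by (simp only: RIP)
  also have "\<dots> = (z \<cdot> (?p \<cdot> x)) \<cdot> (i x \<cdot> ?p)" by (rule key[symmetric])
  also have "\<dots> = (z \<cdot> ((x \<cdot> y) \<cdot> x)) \<cdot> y" by (simp only: y)
  finally show ?thesis .
qed
end

theorem lemma4p3:
  fixes m :: "'a \<Rightarrow> 'a \<Rightarrow> 'a" and e :: 'a
  assumes "C_loop m e" and "flexible m"
  shows "ARIF_loop m e"
proof -
  have L: "loop m e" and C: "\<And>x y z. m x (m y (m y z)) = m (m (m x y) y) z"
    using assms(1) unfolding C_loop_def by auto
  have F: "\<And>x y. m (m x y) x = m x (m y x)" using assms(2) unfolding flexible_def by auto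
  have ex: "\<forall>x. \<exists>y. m x y = e" using L unfolding loop_def by metis
  then obtain i where i: "\<And>x. m x (i x) = e" by metis
  interpret cl m e i
    by unfold_locales (use L i C in \<open>auto simp: loop_def\<close>)
  show ?thesis unfolding ARIF_loop_def using L assms(2) arif[OF F] by blast
qed

end
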